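(* Let $n\ge4$ be even. Let $G$ have node set $\{w_0,w_1,\dots,w_{n/2}\}\cup W'$ with $|W'|=n/2-1$ (disjoint), and edges $(w_i,w_{i-1})$ for $1\le i\le n/2$ together with $(w_i,x)$ for every $1\le i\le n/2$ and every $x\in W'$ (so $d_+(w_i)=n/2$ for $1\le i\le n/2$). Consider the \textsc{Random Pick} process from the initial state in which only $w_0$ is colored. Then with probability at least $1-8/n$, the convergence time is at least $n^2/8$.
   Context: A state is a map $V\to\{b,r,u\}$ (blue, red, uncolored); colored means blue or red. \textsc{Random Pick} process: in each round $t$ every node with at least one out-neighbor picks an out-neighbor uniformly at random, independently; an uncolored node adopts the color of its pick if the pick is colored, and all other nodes keep their color. A state is stable if no uncolored node has a colored out-neighbor; the convergence time is the first round $t\ge0$ at which the state is stable. *)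

theory Defs
  imports "HOL-Probability.Probability"
begin

datatype color = Blue | Red | Uncolored

type_synonym 'v state = "'v \<Rightarrow> color"

definition out_nbrs :: "('v \<times> 'v) set \<Rightarrow> 'v \<Rightarrow> 'v set" where
  "out_nbrs E v = {x. (v, x) \<in> E}"

definition colored :: "color \<Rightarrow> bool" where
  "colored c \<longleftrightarrow> c \<noteq> Uncolored"

definition pick_pmf :: "'v set \<Rightarrow> ('v \<times> 'v) set \<Rightarrow> ('v \<Rightarrow> 'v) pmf" where
  "pick_pmf V E = Pi_pmf V undefined
     (\<lambda>v. if out_nbrs E v = {} then return_pmf v else pmf_of_set (out_nbrs E v))"

definition rp_step :: "'v set \<Rightarrow> ('v \<times> 'v) set \<Rightarrow> 'v state \<Rightarrow> 'v state pmf" where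
  "rp_step V E s = map_pmf
     (\<lambda>pick v. if v \<in> V \<and> out_nbrs E v \<noteq> {} \<and> s v = Uncolored \<and> colored (s (pick v))
               then s (pick v) else s v)
     (pick_pmf V E)"

definition stable :: "'v set \<Rightarrow> ('v \<times> 'v) set \<Rightarrow> 'v state \<Rightarrow> bool" where
  "stable V E s \<longleftrightarrow> (\<forall>v\<in>V. s v = Uncolored \<longrightarrow> (\<forall>x\<in>out_nbrs E v. \<not> colored (s x)))"

fun rp_traj :: "'v set \<Rightarrow> ('v \<times> 'v) set \<Rightarrow> 'v state \<Rightarrow> nat \<Rightarrow> 'v state list pmf" where
  "rp_traj V E s0 0 = return_pmf [s0]"
| "rp_traj V E s0 (Suc t) =
     bind_pmf (rp_traj V E s0 t) (\<lambda>xs. map_pmf (\<lambda>s'. xs @ [s']) (rp_step V E (last xs)))"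

text \<open>Probability that the convergence time (first round at which the state is
  stable) is at least T, i.e. the states at rounds 0..T-1 are all non-stable.\<close>
definition prob_conv_time_ge :: "'v set \<Rightarrow> ('v \<times> 'v) set \<Rightarrow> 'v state \<Rightarrow> nat \<Rightarrow> real" where
  "prob_conv_time_ge V E s0 T =
     measure_pmf.prob (rp_traj V E s0 T) {xs. \<forall>i<T. \<not> stable V E (xs ! i)}"

end

theory Submission
  imports Defs
begin

locale rpg =
  fixes m :: nat and w :: "nat \<Rightarrow> 'v" and W' :: "'v set" and V :: "'v set" and E :: "('v \<times> 'v) set"
  assumes m1: "m \<ge> 1" and inj: "inj_on w {0..m}" and finW: "finite W'"
    and cardW: "card W' = m - 1" and disj: "w ` {0..m} \<inter> W' = {}"
    and Vdef: "V = w ` {0..m} \<union> W'"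
    and Edef: "E = {(w i, w (i - 1)) | i. 1 \<le> i \<and> i \<le> m}
           \<union> {(w i, x) | i x. 1 \<le> i \<and> i \<le> m \<and> x \<in> W'}"
begin

lemma finV: "finite V" using finW by (simp add: Vdef)

lemma wV: "i \<le> m \<Longrightarrow> w i \<in> V" by (auto simp: Vdef)

lemma wW: "i \<le> m \<Longrightarrow> w i \<notin> W'" using disj by (auto simp: disjoint_iff)

lemma winj: "i \<le> m \<Longrightarrow> j \<le> m \<Longrightarrow> w i = w j \<longleftrightarrow> i = j"
  using inj by (auto simp: inj_on_def)

lemma out_w: assumes "1 \<le> i" "i \<le> m" shows "out_nbrs E (w i) = insert (w (i - 1)) W'"
proof -
  have "(w i, x) \<in> E \<longleftrightarrow> x = w (i - 1) \<or> x \<in> W'" for x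
  proof
    assume "(w i, x) \<in> E"
    then obtain j where "1 \<le> j" "j \<le> m" "w i = w j" "x = w (j - 1) \<or> x \<in> W'"
      unfolding Edef by auto
    with winj[of i j] assms show "x = w (i - 1) \<or> x \<in> W'" by auto
  next
    assume "x = w (i - 1) \<or> x \<in> W'"
    then show "(w i, x) \<in> E" unfolding Edef using assms by blast
  qed
  then show ?thesis by (auto simp: out_nbrs_def)
qed

lemma out_other: "v \<notin> w ` {1..m} \<Longrightarrow> out_nbrs E v = {}"
  by (auto simp: out_nbrs_def Edef)

lemma card_out: assumes "1 \<le> i" "i \<le> m" shows "card (out_nbrs E (w i)) = m"
  using out_w[OF assms] wW[of "i - 1"] assms finW cardW m1 by simp

definition goodk :: "nat \<Rightarrow> 'v state \<Rightarrow> bool" where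
  "goodk k s \<longleftrightarrow> k \<le> m \<and> colored (s (w 0)) \<and> (\<forall>x\<in>W'. s x = Uncolored)
      \<and> (\<forall>i\<in>{1..m}. colored (s (w i)) \<longleftrightarrow> i \<le> k)"

definition level :: "'v state \<Rightarrow> nat" where
  "level s = card {i\<in>{1..m}. colored (s (w i))}"

definition upd :: "'v state \<Rightarrow> ('v \<Rightarrow> 'v) \<Rightarrow> 'v state" where
  "upd s pick = (\<lambda>v. if v \<in> V \<and> out_nbrs E v \<noteq> {} \<and> s v = Uncolored \<and> colored (s (pick v))
               then s (pick v) else s v)"

lemma step_eq: "rp_step V E s = map_pmf (upd s) (pick_pmf V E)"
  unfolding rp_step_def upd_def by (rule refl)

lemma level_goodk: "goodk k s \<Longrightarrow> level s = k"
proof -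
  assume g: "goodk k s"
  then have "{i\<in>{1..m}. colored (s (w i))} = {1..k}" unfolding goodk_def by auto
  then show ?thesis by (simp add: level_def)
qed

lemma level_le: "level s \<le> m"
  unfolding level_def by (rule order.trans[OF card_mono[of "{1..m}"]]) auto

lemma pick_support: assumes "f \<in> set_pmf (pick_pmf V E)" "1 \<le> i" "i \<le> m"
  shows "f (w i) \<in> insert (w (i - 1)) W'"
proof -
  have "f (w i) \<in> set_pmf (if out_nbrs E (w i) = {} then return_pmf (w i) else pmf_of_set (out_nbrs E (w i)))"
    using assms(1) wV[of i] assms(3) unfolding pick_pmf_def set_Pi_pmf[OF finV] PiE_dflt_def by auto
  then show ?thesis using out_w[OF assms(2,3)] finW by auto
qed

lemma colored_iff: "colored c \<longleftrightarrow> c \<noteq> Uncolored" by (simp add: colored_def)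

lemma step_good:
  assumes g: "goodk k s" and f: "f \<in> set_pmf (pick_pmf V E)"
  shows "goodk (if k < m \<and> f (w (Suc k)) = w k then Suc k else k) (upd s f)"
proof -
  let ?k = "if k < m \<and> f (w (Suc k)) = w k then Suc k else k"
  have unch: "upd s f v = s v" if "colored (s v)" for v
    using that by (simp add: upd_def colored_iff)
  have "colored (upd s f (w 0))" using g unch unfolding goodk_def by auto
  moreover have "\<forall>x\<in>W'. upd s f x = Uncolored"
  proof
    fix x assume x: "x \<in> W'"
    then have "x \<notin> w ` {1..m}" using wW by auto
    then have "out_nbrs E x = {}" by (rule out_other)
    then show "upd s f x = Uncolored" using g x unfolding goodk_def upd_def by auto
  qed
  moreover have "\<forall>i\<in>{1..m}. colored (upd s f (w i)) \<longleftrightarrow> i \<le> ?k"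
  proof
    fix i assume i: "i \<in> {1..m}"
    show "colored (upd s f (w i)) \<longleftrightarrow> i \<le> ?k"
    proof (cases "i \<le> k")
      case True
      then have "colored (s (w i))" using g i unfolding goodk_def by auto
      then show ?thesis using unch True by auto
    next
      case False
      then have unc: "s (w i) = Uncolored" using g i unfolding goodk_def by (auto simp: colored_iff)
      have ne: "out_nbrs E (w i) \<noteq> {}" using out_w[of i] i by auto
      have fi: "f (w i) \<in> insert (w (i - 1)) W'" using pick_support[OF f] i by auto
      have "colored (upd s f (w i)) \<longleftrightarrow> colored (s (f (w i)))"
        using unc ne wV[of i] i by (auto simp: upd_def colored_iff)
      also have "\<dots> \<longleftrightarrow> (f (w i) = w (i - 1) \<and> i - 1 \<le> k)"
      proof (cases "f (w i) = w (i - 1)")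
        case True
        have "colored (s (w (i - 1))) \<longleftrightarrow> i - 1 \<le> k"
        proof (cases "i - 1 = 0")
          case True then show ?thesis using g unfolding goodk_def by auto
        next
          case False
          then have "i - 1 \<in> {1..m}" using i by auto
          then show ?thesis using g unfolding goodk_def by blast
        qed
        then show ?thesis using True by simp
      next
        case False
        then have "f (w i) \<in> W'" using fi by auto
        then show ?thesis using g False unfolding goodk_def by (auto simp: colored_iff)
      qed
      also have "\<dots> \<longleftrightarrow> i \<le> ?k" using False i by (cases "i = Suc k") auto
      finally show ?thesis .
    qed
  qed
  moreover have "?k \<le> m" using g unfolding goodk_def by auto
  ultimately show ?thesis unfolding goodk_def by blast
qed

lemma stable_goodk: assumes "goodk k s" "stable V E s" shows "k = m"
proof (rule ccontr)
  assume "k \<noteq> m"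
  then have k: "k < m" using assms(1) unfolding goodk_def by auto
  have "Suc k \<in> {1..m}" using k by auto
  then have "\<not> colored (s (w (Suc k)))" using assms(1) unfolding goodk_def by auto
  then have "s (w (Suc k)) = Uncolored" by (simp add: colored_iff)
  moreover have "w k \<in> out_nbrs E (w (Suc k))" using out_w[of "Suc k"] k by auto
  moreover have "colored (s (w k))" using assms(1) k unfolding goodk_def by (cases k) auto
  ultimately show False using assms(2) wV[of "Suc k"] k unfolding stable_def by auto
qed

lemma prob_pick: assumes "k < m"
  shows "measure_pmf.prob (pick_pmf V E) {f. f (w (Suc k)) = w k} = 1 / real m"
proof -
  have "measure_pmf.prob (pick_pmf V E) {f. f (w (Suc k)) = w k}
      = measure_pmf.prob (map_pmf (\<lambda>f. f (w (Suc k))) (pick_pmf V E)) {w k}"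
    by (simp add: vimage_def)
  also have "map_pmf (\<lambda>f. f (w (Suc k))) (pick_pmf V E) = pmf_of_set (out_nbrs E (w (Suc k)))"
    unfolding pick_pmf_def Pi_pmf_component[OF finV] using wV[of "Suc k"] assms out_w[of "Suc k"] by auto
  also have "measure_pmf.prob \<dots> {w k} = 1 / real m"
    using out_w[of "Suc k"] card_out[of "Suc k"] assms finW
    by (subst measure_pmf_of_set) auto
  finally show ?thesis .
qed

lemma step_exp:
  assumes g: "goodk k s"
  shows "(\<integral>\<^sup>+ s'. ennreal (2 ^ level s') \<partial>rp_step V E s) \<le> ennreal ((1 + 1 / real m) * 2 ^ k)"
proof -
  define A where "A = {f. k < m \<and> f (w (Suc k)) = w k}"
  define p where "p = measure_pmf.prob (pick_pmf V E) A"
  have p: "p \<le> 1 / real m"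
  proof (cases "k < m")
    case True then show ?thesis using prob_pick[OF True] by (simp add: p_def A_def)
  next
    case False then show ?thesis by (simp add: p_def A_def)
  qed
  have "(\<integral>\<^sup>+ s'. ennreal (2 ^ level s') \<partial>rp_step V E s)
      = (\<integral>\<^sup>+ f. ennreal (2 ^ level (upd s f)) \<partial>pick_pmf V E)"
    by (simp add: step_eq)
  also have "\<dots> = (\<integral>\<^sup>+ f. ennreal (2 ^ k) * (1 + indicator A f) \<partial>pick_pmf V E)"
  proof (rule nn_integral_cong_AE, rule AE_pmfI)
    fix f assume f: "f \<in> set_pmf (pick_pmf V E)"
    have "level (upd s f) = (if k < m \<and> f (w (Suc k)) = w k then Suc k else k)"
      by (rule level_goodk[OF step_good[OF g f]])
    then show "ennreal (2 ^ level (upd s f)) = ennreal (2 ^ k) * (1 + indicator A f)"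
      by (auto simp: A_def indicator_def ennreal_mult mult.commute)
  qed
  also have "\<dots> = ennreal (2 ^ k) * (1 + ennreal p)"
    by (simp add: nn_integral_cmult nn_integral_add p_def measure_pmf.emeasure_eq_measure)
  also have "\<dots> = ennreal (2 ^ k * (1 + p))"
    by (simp add: ennreal_mult ennreal_plus[symmetric] p_def)
  also have "\<dots> \<le> ennreal ((1 + 1 / real m) * 2 ^ k)"
  proof (intro ennreal_leI)
    have "p * 2 ^ k \<le> (1 / real m) * 2 ^ k" using p by (intro mult_right_mono) auto
    then show "2 ^ k * (1 + p) \<le> (1 + 1 / real m) * 2 ^ k" by (simp add: algebra_simps)
  qed
  finally show ?thesis .
qed

lemma traj_inv:
  assumes g0: "goodk 0 s0"
  shows "xs \<in> set_pmf (rp_traj V E s0 t) \<Longrightarrow> length xs = Suc t \<and> (\<forall>i\<le>t. \<exists>k. goodk k (xs ! i))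
     \<and> (\<forall>i j. i \<le> j \<longrightarrow> j \<le> t \<longrightarrow> level (xs ! i) \<le> level (xs ! j))"
proof (induction t arbitrary: xs)
  case 0
  then show ?case using g0 by auto
next
  case (Suc t)
  from Suc.prems obtain ys s' where ys: "ys \<in> set_pmf (rp_traj V E s0 t)"
    and s': "s' \<in> set_pmf (rp_step V E (last ys))" and xs: "xs = ys @ [s']"
    by auto
  note IH = Suc.IH[OF ys]
  have lst: "last ys = ys ! t" using IH by (cases ys rule: rev_cases) auto
  obtain k where gk: "goodk k (ys ! t)" using IH by auto
  from s' obtain f where f: "f \<in> set_pmf (pick_pmf V E)" and s'f: "s' = upd (ys ! t) f"
    by (auto simp: step_eq lst)
  have gs': "goodk (if k < m \<and> f (w (Suc k)) = w k then Suc k else k) s'"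
    using step_good[OF gk f] s'f by simp
  have lev: "level (ys ! t) \<le> level s'"
    using level_goodk[OF gk] level_goodk[OF gs'] by auto
  have nth: "xs ! i = (if i \<le> t then ys ! i else s')" if "i \<le> Suc t" for i
    using that IH xs by (auto simp: nth_append)
  have "\<forall>i\<le>Suc t. \<exists>k. goodk k (xs ! i)"
    using nth IH gs' by (metis le_SucE order_refl)
  moreover have "\<forall>i j. i \<le> j \<longrightarrow> j \<le> Suc t \<longrightarrow> level (xs ! i) \<le> level (xs ! j)"
  proof (intro allI impI)
    fix i j assume ij: "i \<le> j" "j \<le> Suc t"
    show "level (xs ! i) \<le> level (xs ! j)"
    proof (cases "j \<le> t")
      case True then show ?thesis using IH ij nth by auto
    next
      case False
      then have "j = Suc t" using ij by auto
      then show ?thesis using IH ij nth lev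
        by (cases "i \<le> t") (auto intro: order.trans[of _ "level (ys ! t)"])
    qed
  qed
  ultimately show ?case using IH xs by simp
qed

lemma traj_exp:
  assumes g0: "goodk 0 s0"
  shows "j \<le> t \<Longrightarrow> (\<integral>\<^sup>+ xs. ennreal (2 ^ level (xs ! j)) \<partial>rp_traj V E s0 t) \<le> ennreal ((1 + 1 / real m) ^ j)"
proof (induction t arbitrary: j)
  case 0
  then show ?case using level_goodk[OF g0] by simp
next
  case (Suc t)
  let ?c = "1 + 1 / real m"
  have "(\<integral>\<^sup>+ xs. ennreal (2 ^ level (xs ! j)) \<partial>rp_traj V E s0 (Suc t))
     = (\<integral>\<^sup>+ xs. (\<integral>\<^sup>+ s'. ennreal (2 ^ level ((xs @ [s']) ! j)) \<partial>rp_step V E (last xs)) \<partial>rp_traj V E s0 t)"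
    by simp
  also have "\<dots> \<le> ennreal (?c ^ j)"
  proof (cases "j \<le> t")
    case True
    have "(\<integral>\<^sup>+ xs. (\<integral>\<^sup>+ s'. ennreal (2 ^ level ((xs @ [s']) ! j)) \<partial>rp_step V E (last xs)) \<partial>rp_traj V E s0 t)
        = (\<integral>\<^sup>+ xs. ennreal (2 ^ level (xs ! j)) \<partial>rp_traj V E s0 t)"
    proof (rule nn_integral_cong_AE, rule AE_pmfI)
      fix xs assume "xs \<in> set_pmf (rp_traj V E s0 t)"
      then have "length xs = Suc t" using traj_inv[OF g0] by blast
      then have "(xs @ [s']) ! j = xs ! j" for s' using True by (simp add: nth_append)
      then show "(\<integral>\<^sup>+ s'. ennreal (2 ^ level ((xs @ [s']) ! j)) \<partial>rp_step V E (last xs))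
           = ennreal (2 ^ level (xs ! j))" by simp
    qed
    then show ?thesis using Suc.IH[OF True] by simp
  next
    case False
    then have j: "j = Suc t" using Suc.prems by auto
    have "(\<integral>\<^sup>+ xs. (\<integral>\<^sup>+ s'. ennreal (2 ^ level ((xs @ [s']) ! j)) \<partial>rp_step V E (last xs)) \<partial>rp_traj V E s0 t)
        \<le> (\<integral>\<^sup>+ xs. ennreal ?c * ennreal (2 ^ level (xs ! t)) \<partial>rp_traj V E s0 t)"
    proof (rule nn_integral_mono_AE, rule AE_pmfI)
      fix xs assume xs: "xs \<in> set_pmf (rp_traj V E s0 t)"
      then have inv: "length xs = Suc t" "\<exists>k. goodk k (xs ! t)" using traj_inv[OF g0] by blast+
      then obtain k where gk: "goodk k (xs ! t)" by blast
      have lst: "last xs = xs ! t" using inv by (cases xs rule: rev_cases) auto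
      have "(xs @ [s']) ! j = s'" for s' using inv j by (simp add: nth_append)
      then have "(\<integral>\<^sup>+ s'. ennreal (2 ^ level ((xs @ [s']) ! j)) \<partial>rp_step V E (last xs))
          = (\<integral>\<^sup>+ s'. ennreal (2 ^ level s') \<partial>rp_step V E (xs ! t))" by (simp add: lst)
      also have "\<dots> \<le> ennreal (?c * 2 ^ k)" by (rule step_exp[OF gk])
      also have "\<dots> = ennreal ?c * ennreal (2 ^ level (xs ! t))"
        using level_goodk[OF gk] by (simp add: ennreal_mult)
      finally show "(\<integral>\<^sup>+ s'. ennreal (2 ^ level ((xs @ [s']) ! j)) \<partial>rp_step V E (last xs))
          \<le> ennreal ?c * ennreal (2 ^ level (xs ! t))" .
    qed
    also have "\<dots> = ennreal ?c * (\<integral>\<^sup>+ xs. ennreal (2 ^ level (xs ! t)) \<partial>rp_traj V E s0 t)"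
      by (simp add: nn_integral_cmult)
    also have "\<dots> \<le> ennreal ?c * ennreal (?c ^ t)"
      using Suc.IH[of t] by (intro mult_left_mono) auto
    also have "\<dots> = ennreal (?c ^ j)" using j by (simp add: ennreal_mult)
    finally show ?thesis .
  qed
  finally show ?case .
qed

lemma final:
  assumes g0: "goodk 0 s0" and T: "T \<ge> 1"
  shows "measure_pmf.prob (rp_traj V E s0 T) {xs. \<exists>i<T. stable V E (xs ! i)}
          \<le> (1 + 1 / real m) ^ (T - 1) / 2 ^ m"
proof -
  let ?M = "rp_traj V E s0 T"
  let ?A = "{xs. \<exists>i<T. stable V E (xs ! i)}"
  let ?c = "1 + 1 / real m"
  have "ennreal (measure_pmf.prob ?M ?A) = emeasure ?M ?A"
    by (simp add: measure_pmf.emeasure_eq_measure)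
  also have "\<dots> = (\<integral>\<^sup>+ xs. indicator ?A xs \<partial>?M)" by simp
  also have "\<dots> \<le> (\<integral>\<^sup>+ xs. ennreal (1 / 2 ^ m) * ennreal (2 ^ level (xs ! (T - 1))) \<partial>?M)"
  proof (rule nn_integral_mono_AE, rule AE_pmfI)
    fix xs assume xs: "xs \<in> set_pmf ?M"
    note inv = traj_inv[OF g0 xs]
    show "indicator ?A xs \<le> ennreal (1 / 2 ^ m) * ennreal (2 ^ level (xs ! (T - 1)))"
    proof (cases "xs \<in> ?A")
      case True
      then obtain i where i: "i < T" "stable V E (xs ! i)" by auto
      have "i \<le> T" using i by simp
      then obtain k where gk: "goodk k (xs ! i)" using inv by blast
      have "k = m" by (rule stable_goodk[OF gk i(2)])
      then have "level (xs ! i) = m" using level_goodk[OF gk] by simp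
      moreover have "level (xs ! i) \<le> level (xs ! (T - 1))" using inv i by auto
      ultimately have "level (xs ! (T - 1)) = m" using level_le[of "xs ! (T - 1)"] by simp
      then show ?thesis using True by (simp add: ennreal_mult[symmetric])
    qed simp
  qed
  also have "\<dots> = ennreal (1 / 2 ^ m) * (\<integral>\<^sup>+ xs. ennreal (2 ^ level (xs ! (T - 1))) \<partial>?M)"
    by (simp add: nn_integral_cmult)
  also have "\<dots> \<le> ennreal (1 / 2 ^ m) * ennreal (?c ^ (T - 1))"
    using traj_exp[OF g0, of "T - 1" T] by (intro mult_left_mono) auto
  also have "\<dots> = ennreal (?c ^ (T - 1) / 2 ^ m)" by (simp add: ennreal_mult[symmetric])
  finally show ?thesis by (subst (asm) ennreal_le_iff) auto
qed

end

lemma exp_half_le: "exp (1/2::real) \<le> 5/3"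
proof -
  have "exp (1/2::real) = exp (1/32) ^ 16" by (simp add: exp_of_nat_mult[symmetric])
  also have "\<dots> \<le> (1057/1024) ^ 16"
    using exp_bound[of "1/32"] by (intro power_mono) (auto simp: power2_eq_square)
  also have "\<dots> \<le> 5/3" by (simp add: power_divide)
  finally show ?thesis .
qed

lemma key_ineq: "m \<ge> 5 \<Longrightarrow> real m * exp (real m / 2) \<le> 4 * 2 ^ m"
proof (induction m rule: nat_induct_at_least)
  case base
  have "exp (real 5 / 2) = exp (1/2) ^ 5" by (simp add: exp_of_nat_mult[symmetric])
  also have "\<dots> \<le> (5/3)^5" using exp_half_le by (intro power_mono) auto
  finally have "exp (5/2::real) \<le> (5/3)^5" by simp
  then have "5 * exp (5/2::real) \<le> 5 * (5/3)^5" by simp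
  also have "\<dots> \<le> 4 * 2^5" by (simp add: power_divide)
  finally show ?case by simp
next
  case (Suc m)
  have e: "exp (real (Suc m) / 2) = exp (real m / 2) * exp (1/2)"
    by (simp add: exp_add[symmetric] add_divide_distrib)
  have "real (Suc m) * exp (real (Suc m) / 2) \<le> (6/5) * real m * exp (real m / 2) * exp (1/2)"
  proof -
    have "real (Suc m) \<le> (6/5) * real m" using Suc.hyps by simp
    then have "real (Suc m) * (exp (real m / 2) * exp (1/2)) \<le> (6/5) * real m * (exp (real m / 2) * exp (1/2))"
      by (intro mult_right_mono) auto
    then show ?thesis by (simp only: e mult.assoc)
  qed
  also have "\<dots> = ((6/5) * (real m * exp (real m / 2))) * exp (1/2)" by simp
  also have "\<dots> \<le> ((6/5) * (4 * 2 ^ m)) * (5/3)"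
  proof (rule mult_mono)
    show "(6/5) * (real m * exp (real m / 2)) \<le> (6/5) * (4 * 2 ^ m)"
      using Suc.IH by linarith
  qed (use exp_half_le in auto)
  also have "\<dots> = 4 * 2 ^ Suc m" by simp
  finally show ?case .
qed

theorem mainTheorem10:
  fixes n :: nat and w :: "nat \<Rightarrow> 'v" and W' :: "'v set"
    and V :: "'v set" and E :: "('v \<times> 'v) set" and s0 :: "'v state"
  assumes "n \<ge> 4" and "even n"
    and "inj_on w {0..n div 2}"
    and "finite W'" and "card W' = n div 2 - 1"
    and "w ` {0..n div 2} \<inter> W' = {}"
    and "V = w ` {0..n div 2} \<union> W'"
    and "E = {(w i, w (i - 1)) | i. 1 \<le> i \<and> i \<le> n div 2}
           \<union> {(w i, x) | i x. 1 \<le> i \<and> i \<le> n div 2 \<and> x \<in> W'}"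
    and "colored (s0 (w 0))"
    and "\<forall>v \<in> V - {w 0}. s0 v = Uncolored"
  shows "prob_conv_time_ge V E s0 (nat \<lceil>real n ^ 2 / 8\<rceil>) \<ge> 1 - 8 / real n"
proof -
  define m where "m = n div 2"
  have n2: "n = 2 * m" using assms(2) by (simp add: m_def)
  have m2: "m \<ge> 2" using assms(1) n2 by simp
  interpret rpg m w W' V E
    by unfold_locales (use assms m2 in \<open>simp_all add: m_def\<close>)
  define T where "T = nat \<lceil>real n ^ 2 / 8\<rceil>"
  let ?A = "{xs. \<exists>i<T. stable V E (xs ! i)}"
  let ?M = "rp_traj V E s0 T"
  have g0: "goodk 0 s0"
  proof -
    have w0W: "w 0 \<notin> W'" using wW[of 0] by simp
    have "\<forall>x\<in>W'. s0 x = Uncolored" using assms(10) w0W by (auto simp: Vdef)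
    moreover have "\<forall>i\<in>{1..m}. colored (s0 (w i)) \<longleftrightarrow> i \<le> 0"
    proof
      fix i assume i: "i \<in> {1..m}"
      then have "w i \<in> V - {w 0}" using wV[of i] winj[of i 0] by auto
      then show "colored (s0 (w i)) \<longleftrightarrow> i \<le> 0" using assms(10) i by (auto simp: colored_iff)
    qed
    ultimately show ?thesis using assms(9) unfolding goodk_def by simp
  qed
  have eq: "prob_conv_time_ge V E s0 T = 1 - measure_pmf.prob ?M ?A"
  proof -
    have "{xs. \<forall>i<T. \<not> stable V E (xs ! i)} = space (measure_pmf ?M) - ?A" by auto
    moreover have "measure_pmf.prob ?M (space (measure_pmf ?M) - ?A) = 1 - measure_pmf.prob ?M ?A"
      by (rule measure_pmf.prob_compl) simp
    ultimately show ?thesis unfolding prob_conv_time_ge_def by simp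
  qed
  show ?thesis
  proof (cases "m \<le> 4")
    case True
    then have "1 - 8 / real n \<le> 0" using n2 m2 by (simp add: field_simps)
    moreover have "0 \<le> prob_conv_time_ge V E s0 T" unfolding prob_conv_time_ge_def by simp
    ultimately show ?thesis unfolding T_def by linarith
  next
    case False
    then have m5: "m \<ge> 5" by simp
    have Tr: "real T < real m ^ 2 / 2 + 1" using n2 unfolding T_def by (simp add: power_mult_distrib) linarith
    have T1: "T \<ge> 1"
    proof -
      have "0 < real n ^ 2 / 8" using m5 n2 by simp
      then have "1 \<le> \<lceil>real n ^ 2 / 8\<rceil>" by (simp add: one_le_ceiling)
      then show ?thesis unfolding T_def by linarith
    qed
    have c: "(1 + 1 / real m) ^ (T - 1) \<le> exp (real m / 2)"
    proof -
      have "(1 + 1 / real m) ^ (T - 1) \<le> exp (1 / real m) ^ (T - 1)"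
        using exp_ge_add_one_self[of "1 / real m"] by (intro power_mono) auto
      also have "\<dots> = exp (real (T - 1) / real m)" by (simp add: exp_of_nat_mult[symmetric])
      also have "\<dots> \<le> exp (real m / 2)"
      proof -
        have "real (T - 1) = real T - 1" using T1 by simp
        then have "real (T - 1) \<le> real m ^ 2 / 2" using Tr by simp
        then have "real (T - 1) / real m \<le> real m ^ 2 / 2 / real m" using m5 by (intro divide_right_mono) auto
        also have "\<dots> = real m / 2" using m5 by (simp add: power2_eq_square)
        finally show ?thesis by simp
      qed
      finally show ?thesis .
    qed
    have "measure_pmf.prob ?M ?A \<le> (1 + 1 / real m) ^ (T - 1) / 2 ^ m" by (rule final[OF g0 T1])
    also have "\<dots> \<le> exp (real m / 2) / 2 ^ m" using c by (intro divide_right_mono) auto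
    also have "\<dots> \<le> 4 / real m"
      using key_ineq[OF m5] m5 by (simp add: field_simps)
    also have "\<dots> = 8 / real n" using n2 by simp
    finally show ?thesis using eq unfolding T_def by linarith
  qed
qed

end
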